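(* Let $n\ge1$ and $0\le k\le n-1$. In $\mathbb Q[\lambda_1,\dots,\lambda_n]$, $$\sum_{i=1}^n \lambda_i^k\,\frac{\partial^k}{\partial\lambda_i^k}V(\lambda_1,\dots,\lambda_n) \;=\; k!\binom{n}{k+1}\,V(\lambda_1,\dots,\lambda_n),$$ where $V(\lambda_1,\dots,\lambda_n)=\prod_{1\le i<j\le n}(\lambda_j-\lambda_i)$.
   Context: $\lambda_1,\dots,\lambda_n$ are independent indeterminates. *)

theory Defs
  imports Complex_Main "HOL-Library.Poly_Mapping"
begin

text \<open>Multivariate polynomials over the rationals in indeterminates indexed by nat:
  a polynomial is a finitely supported map from monomials (exponent vectors,
  finitely supported nat \<Rightarrow> nat) to rational coefficients; multiplication is
  the convolution product provided by Poly_Mapping.\<close>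
type_synonym mpoly_rat = "(nat \<Rightarrow>\<^sub>0 nat) \<Rightarrow>\<^sub>0 rat"

definition Var :: "nat \<Rightarrow> mpoly_rat" where
  "Var i = Poly_Mapping.single (Poly_Mapping.single i 1) 1"

definition pdiff :: "nat \<Rightarrow> mpoly_rat \<Rightarrow> mpoly_rat" where
  "pdiff i p = (\<Sum>m\<in>Poly_Mapping.keys p.
      Poly_Mapping.single (m - Poly_Mapping.single i 1)
        (of_nat (Poly_Mapping.lookup m i) * Poly_Mapping.lookup p m))"

definition Vand :: "nat \<Rightarrow> mpoly_rat" where
  "Vand n = (\<Prod>(i, j)\<in>{(i, j). 1 \<le> i \<and> i < j \<and> j \<le> n}. Var j - Var i)"

end

theory Submission imports Defs begin

definition ts :: "nat \<Rightarrow> nat \<Rightarrow> nat" where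
  "ts a x = (if x = a then Suc a else if x = Suc a then a else x)"

lemma ts_ts [simp]: "ts a (ts a x) = x"
  by (simp add: ts_def)

lemma inj_ts [simp]: "inj (ts a)"
  by (metis injI ts_ts)

lemma lookup_map_key:
  assumes "inj f"
  shows "Poly_Mapping.lookup (Poly_Mapping.map_key f p) x = Poly_Mapping.lookup p (f x)"
  using assms by (simp add: map_key.rep_eq)

definition sw :: "nat \<Rightarrow> (nat \<Rightarrow>\<^sub>0 nat) \<Rightarrow> (nat \<Rightarrow>\<^sub>0 nat)" where
  "sw a m = Poly_Mapping.map_key (ts a) m"

lemma lookup_sw [simp]: "Poly_Mapping.lookup (sw a m) x = Poly_Mapping.lookup m (ts a x)"
  by (simp add: sw_def lookup_map_key)

lemma sw_sw [simp]: "sw a (sw a m) = m"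
  by (rule poly_mapping_eqI) simp

lemma inj_sw [simp]: "inj (sw a)"
  by (metis injI sw_sw)

lemma bij_sw [simp]: "bij (sw a)"
  by (metis bijI' sw_sw)

lemma sw_add: "sw a (m + m') = sw a m + sw a m'"
  by (rule poly_mapping_eqI) (simp add: lookup_add)

lemma sw_zero [simp]: "sw a 0 = 0"
  by (rule poly_mapping_eqI) simp

lemma sw_single [simp]: "sw a (Poly_Mapping.single i c) = Poly_Mapping.single (ts a i) c"
  by (rule poly_mapping_eqI) (auto simp: lookup_single when_def)

definition R :: "nat \<Rightarrow> mpoly_rat \<Rightarrow> mpoly_rat" where
  "R a p = Poly_Mapping.map_key (sw a) p"

lemma lookup_R [simp]: "Poly_Mapping.lookup (R a p) m = Poly_Mapping.lookup p (sw a m)"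
  by (simp add: R_def lookup_map_key)

lemma R_mult: "R a (p * q) = R a p * R a q"
proof (rule poly_mapping_eqI)
  fix m
  have eq: "\<And>l q'. (m = l + q') = (sw a m = sw a l + sw a q')"
    by (metis sw_add sw_sw)
  have "Poly_Mapping.lookup (R a p * R a q) m =
     (\<Sum>l. Poly_Mapping.lookup p (sw a l) * (\<Sum>q'. Poly_Mapping.lookup q (sw a q') when m = l + q'))"
    by (simp add: lookup_mult)
  also have "\<dots> = (\<Sum>l. Poly_Mapping.lookup p (sw a l) * (\<Sum>q'. Poly_Mapping.lookup q (sw a q') when sw a m = sw a l + sw a q'))"
    by (simp add: eq)
  also have "\<dots> = (\<Sum>l. Poly_Mapping.lookup p (sw a l) * (\<Sum>q'. Poly_Mapping.lookup q q' when sw a m = sw a l + q'))"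
    by (rule Sum_any.cong, rule arg_cong[where f="\<lambda>x. _ * x"],
        rule Sum_any.reindex_cong[where l="sw a"]) (auto simp: fun_eq_iff)
  also have "\<dots> = (\<Sum>l. Poly_Mapping.lookup p l * (\<Sum>q'. Poly_Mapping.lookup q q' when sw a m = l + q'))"
    by (rule Sum_any.reindex_cong[where l="sw a"]) (auto simp: fun_eq_iff)
  also have "\<dots> = Poly_Mapping.lookup (R a (p * q)) m"
    by (simp add: lookup_mult)
  finally show "Poly_Mapping.lookup (R a (p * q)) m = Poly_Mapping.lookup (R a p * R a q) m" ..
qed

lemma R_one [simp]: "R a 1 = 1"
  by (rule poly_mapping_eqI) (simp add: lookup_one when_def, metis sw_sw sw_zero)

lemma R_diff: "R a (p - q) = R a p - R a q"
  by (rule poly_mapping_eqI) (simp add: lookup_minus)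

lemma R_uminus: "R a (- p) = - R a p"
  by (rule poly_mapping_eqI) simp

lemma R_Var [simp]: "R a (Var i) = Var (ts a i)"
proof -
  have "Poly_Mapping.single (Poly_Mapping.single i 1) 1 = Poly_Mapping.single (sw a (Poly_Mapping.single (ts a i) 1)) (1::rat)"
    by simp
  then show ?thesis unfolding Var_def R_def by (metis inj_sw map_key_single)
qed

lemma R_prod: "R a (prod f S) = prod (\<lambda>x. R a (f x)) S"
  by (induction S rule: infinite_finite_induct) (simp_all add: R_mult)

definition PP :: "nat \<Rightarrow> (nat \<times> nat) set" where
  "PP n = {(i, j). 1 \<le> i \<and> i < j \<and> j \<le> n}"

definition FF :: "nat \<times> nat \<Rightarrow> mpoly_rat" where
  "FF = (\<lambda>(i, j). Var j - Var i)"

lemma Vand_alt: "Vand n = prod FF (PP n)"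
  unfolding Vand_def FF_def PP_def ..

lemma finite_PP [simp]: "finite (PP n)"
  by (rule finite_subset[of _ "{1..n} \<times> {1..n}"]) (auto simp: PP_def)

lemma R_Vand:
  assumes "1 \<le> a" "Suc a \<le> n"
  shows "R a (Vand n) = - Vand n"
proof -
  define g where "g = (\<lambda>(i, j). (ts a i, ts a j))"
  define q0 where "q0 = (a, Suc a)"
  have q0P: "q0 \<in> PP n" using assms by (simp add: q0_def PP_def)
  have RF: "R a (FF p) = FF (g p)" for p
    by (cases p) (simp add: FF_def g_def R_diff)
  have gg: "g (g p) = p" for p by (cases p) (simp add: g_def)
  have gin: "g p \<in> PP n - {q0}" if "p \<in> PP n - {q0}" for p
    using that assms by (cases p) (auto simp: g_def PP_def q0_def ts_def)
  have bij: "bij_betw g (PP n - {q0}) (PP n - {q0})"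
  proof (rule bij_betw_byWitness[where f'=g])
    show "\<forall>p\<in>PP n - {q0}. g (g p) = p" "\<forall>p\<in>PP n - {q0}. g (g p) = p" using gg by blast+
    show "g ` (PP n - {q0}) \<subseteq> PP n - {q0}" "g ` (PP n - {q0}) \<subseteq> PP n - {q0}" using gin by blast+
  qed
  have "R a (Vand n) = prod (\<lambda>p. FF (g p)) (PP n)"
    by (simp add: Vand_alt R_prod RF)
  also have "\<dots> = FF (g q0) * prod (\<lambda>p. FF (g p)) (PP n - {q0})"
    using q0P by (simp add: prod.remove)
  also have "prod (\<lambda>p. FF (g p)) (PP n - {q0}) = prod FF (PP n - {q0})"
    by (rule prod.reindex_bij_betw[OF bij])
  also have "FF (g q0) = - FF q0"
    by (simp add: g_def q0_def ts_def FF_def)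
  also have "- FF q0 * prod FF (PP n - {q0}) = - prod FF (PP n)"
    using q0P by (simp add: prod.remove)
  finally show ?thesis by (simp add: Vand_alt)
qed

lemma lookup_Vand_swap:
  assumes "1 \<le> a" "Suc a \<le> n"
  shows "Poly_Mapping.lookup (Vand n) (sw a m) = - Poly_Mapping.lookup (Vand n) m"
  using arg_cong[OF R_Vand[OF assms], of "\<lambda>p. Poly_Mapping.lookup p m"] by simp

lemma lookup_Vand_eq0:
  assumes "1 \<le> a" "a < b" "b \<le> n" "Poly_Mapping.lookup m a = Poly_Mapping.lookup m b"
  shows "Poly_Mapping.lookup (Vand n) m = 0"
  using assms
proof (induction "b - a" arbitrary: a m)
  case 0
  then show ?case by simp
next
  case (Suc d)
  show ?case
  proof (cases "b = Suc a")
    case True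
    have "sw a m = m"
      by (rule poly_mapping_eqI) (use Suc.prems True in \<open>auto simp: ts_def\<close>)
    then show ?thesis using lookup_Vand_swap[of a n m] Suc.prems True by simp
  next
    case False
    have "Poly_Mapping.lookup (Vand n) (sw a m) = 0"
      using Suc.hyps(1)[of "Suc a" "sw a m"] Suc.prems Suc.hyps(2) False by (auto simp: ts_def)
    then show ?thesis using lookup_Vand_swap[of a n m] Suc.prems by simp
  qed
qed

lemma keys_FF:
  assumes "m \<in> Poly_Mapping.keys (FF x)"
  shows "Poly_Mapping.lookup m l \<le> (if fst x = l \<or> snd x = l then 1 else 0)"
proof -
  obtain i j where x: "x = (i, j)" by (cases x)
  have "m = Poly_Mapping.single j 1 \<or> m = Poly_Mapping.single i 1"
  proof (rule ccontr)
    assume "\<not> ?thesis"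
    then have "Poly_Mapping.lookup (FF x) m = 0"
      by (auto simp: x FF_def Var_def lookup_minus lookup_single when_def)
    then show False using assms by (simp add: in_keys_iff)
  qed
  then show ?thesis by (auto simp: x lookup_single when_def)
qed

lemma keys_prod_bound:
  assumes "finite S" "m \<in> Poly_Mapping.keys (prod FF S)"
  shows "Poly_Mapping.lookup m l \<le> card {p\<in>S. fst p = l \<or> snd p = l}"
  using assms
proof (induction S arbitrary: m rule: finite_induct)
  case empty
  then show ?case by simp
next
  case (insert x S)
  from insert.prems have "m \<in> Poly_Mapping.keys (FF x * prod FF S)" using insert.hyps by simp
  then obtain a b where ab: "m = a + b" "a \<in> Poly_Mapping.keys (FF x)" "b \<in> Poly_Mapping.keys (prod FF S)"
    using keys_mult by blast
  have "{p\<in>insert x S. fst p = l \<or> snd p = l} = (if fst x = l \<or> snd x = l then insert x {p\<in>S. fst p = l \<or> snd p = l} else {p\<in>S. fst p = l \<or> snd p = l})"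
    by auto
  then have c: "card {p\<in>insert x S. fst p = l \<or> snd p = l} = (if fst x = l \<or> snd x = l then 1 else 0) + card {p\<in>S. fst p = l \<or> snd p = l}"
    using insert.hyps by simp
  show ?case using keys_FF[OF ab(2), of l] insert.IH[OF ab(3)] ab(1) c by (simp add: lookup_add)
qed

lemma keys_Vand_bound:
  assumes "m \<in> Poly_Mapping.keys (Vand n)"
  shows "l \<in> {1..n} \<Longrightarrow> Poly_Mapping.lookup m l \<le> n - 1"
    and "l \<notin> {1..n} \<Longrightarrow> Poly_Mapping.lookup m l = 0"
proof -
  have b: "Poly_Mapping.lookup m l \<le> card {p\<in>PP n. fst p = l \<or> snd p = l}"
    using keys_prod_bound[OF finite_PP, of m n l] assms by (simp add: Vand_alt)
  define f where "f = (\<lambda>p::nat\<times>nat. if fst p = l then snd p else fst p)"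
  have "inj_on f {p\<in>PP n. fst p = l \<or> snd p = l}"
    by (auto simp: inj_on_def f_def PP_def split: if_splits)
  moreover have "f ` {p\<in>PP n. fst p = l \<or> snd p = l} \<subseteq> {1..n} - {l}"
    by (auto simp: f_def PP_def)
  ultimately have "card {p\<in>PP n. fst p = l \<or> snd p = l} \<le> card ({1..n} - {l})"
    by (meson card_inj_on_le finite_Diff finite_atLeastAtMost)
  then show "l \<in> {1..n} \<Longrightarrow> Poly_Mapping.lookup m l \<le> n - 1" using b by simp
  show "l \<notin> {1..n} \<Longrightarrow> Poly_Mapping.lookup m l = 0"
  proof -
    assume "l \<notin> {1..n}"
    then have "{p\<in>PP n. fst p = l \<or> snd p = l} = {}" by (auto simp: PP_def)
    then show ?thesis using b by (metis card.empty le_zero_eq)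
  qed
qed

lemma keys_Vand_perm:
  assumes "m \<in> Poly_Mapping.keys (Vand n)" "n \<ge> 1"
  shows "Poly_Mapping.lookup m ` {1..n} = {..<n}" "inj_on (Poly_Mapping.lookup m) {1..n}"
proof -
  show inj: "inj_on (Poly_Mapping.lookup m) {1..n}"
  proof (rule inj_onI, rule ccontr)
    fix a b assume ab: "a \<in> {1..n}" "b \<in> {1..n}" "Poly_Mapping.lookup m a = Poly_Mapping.lookup m b" "a \<noteq> b"
    have "Poly_Mapping.lookup (Vand n) m = 0"
    proof (cases "a < b")
      case True then show ?thesis using lookup_Vand_eq0[of a b n m] ab by auto
    next
      case False then show ?thesis using lookup_Vand_eq0[of b a n m] ab by auto
    qed
    then show False using assms by (simp add: in_keys_iff)
  qed
  have sub: "Poly_Mapping.lookup m ` {1..n} \<subseteq> {..<n}"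
    using keys_Vand_bound(1)[OF assms(1)] assms(2) by fastforce
  have "card (Poly_Mapping.lookup m ` {1..n}) = card {..<n}"
    using card_image[OF inj] by simp
  then show "Poly_Mapping.lookup m ` {1..n} = {..<n}"
    using sub by (simp add: card_subset_eq)
qed

lemma ff_choose: "(\<Prod>t<k. (a::nat) - t) = fact k * (a choose k)"
proof (induction k)
  case 0 then show ?case by simp
next
  case (Suc k)
  have "(\<Prod>t<Suc k. a - t) = fact k * ((a - k) * (a choose k))"
    by (simp add: Suc)
  also have "(a - k) * (a choose k) = Suc k * (a choose Suc k)"
    using binomial_absorb_comp[of a k] times_binomial_minus1_eq[of "Suc k" a] by simp
  finally have "(\<Prod>t<Suc k. a - t) = fact k * (Suc k * (a choose Suc k))" .
  moreover have "fact (Suc k) = Suc k * (fact k :: nat)" by simp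
  ultimately show ?case by (simp only: mult.assoc mult.left_commute)
qed

lemma single_Suc: "Poly_Mapping.single i (1::nat) + Poly_Mapping.single i k = Poly_Mapping.single i (Suc k)"
  by (simp add: single_add[symmetric])

lemma lookup_pdiff:
  "Poly_Mapping.lookup (pdiff i p) m = of_nat (Poly_Mapping.lookup m i + 1) * Poly_Mapping.lookup p (m + Poly_Mapping.single i 1)"
proof -
  define e where "e = Poly_Mapping.single i (1::nat)"
  define c where "c = (\<lambda>x. of_nat (Poly_Mapping.lookup x i) * Poly_Mapping.lookup p x :: rat)"
  have pw: "(c x when x - e = m) = (if m + e = x then c x else 0)" for x
  proof (cases "x - e = m")
    case True
    show ?thesis
    proof (cases "Poly_Mapping.lookup x i = 0")
      case True then show ?thesis by (simp add: c_def)
    next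
      case False
      have "x = m + e"
        by (rule poly_mapping_eqI) (use \<open>x - e = m\<close> False in \<open>auto simp: e_def lookup_minus lookup_add lookup_single when_def\<close>)
      then show ?thesis using True by simp
    qed
  next
    case False
    have "m + e - e = m" by simp
    then have "m + e \<noteq> x" using False by auto
    then show ?thesis using False by simp
  qed
  have "Poly_Mapping.lookup (pdiff i p) m = (\<Sum>x\<in>Poly_Mapping.keys p. (c x when x - e = m))"
    by (simp add: pdiff_def lookup_sum lookup_single c_def e_def)
  also have "\<dots> = (\<Sum>x\<in>Poly_Mapping.keys p. if m + e = x then c x else 0)"
    by (simp add: pw)
  also have "\<dots> = c (m + e)"
    by (simp add: c_def in_keys_iff)
  finally show ?thesis by (simp add: c_def e_def lookup_add)
qed

lemma lookup_pdiff_pow: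
  "Poly_Mapping.lookup ((pdiff i ^^ k) p) m = of_nat (\<Prod>t<k. Poly_Mapping.lookup m i + k - t) * Poly_Mapping.lookup p (m + Poly_Mapping.single i k)"
proof (induction k arbitrary: m)
  case 0 then show ?case by simp
next
  case (Suc k)
  have e: "m + Poly_Mapping.single i 1 + Poly_Mapping.single i k = m + Poly_Mapping.single i (Suc k)"
    by (simp only: add.assoc single_Suc)
  have pr: "(\<Prod>t<Suc k. Poly_Mapping.lookup m i + Suc k - t) = (\<Prod>t<k. Poly_Mapping.lookup m i + 1 + k - t) * (Poly_Mapping.lookup m i + 1)"
    by simp
  have l: "Poly_Mapping.lookup (m + Poly_Mapping.single i 1) i = Poly_Mapping.lookup m i + 1"
    by (simp add: lookup_add)
  have "Poly_Mapping.lookup ((pdiff i ^^ Suc k) p) m = of_nat (Poly_Mapping.lookup m i + 1) * Poly_Mapping.lookup ((pdiff i ^^ k) p) (m + Poly_Mapping.single i 1)"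
    by (simp only: funpow.simps o_apply lookup_pdiff)
  also have "\<dots> = of_nat (Poly_Mapping.lookup m i + 1) * (of_nat (\<Prod>t<k. Poly_Mapping.lookup m i + 1 + k - t) * Poly_Mapping.lookup p (m + Poly_Mapping.single i (Suc k)))"
    by (simp only: Suc l e)
  also have "\<dots> = of_nat (\<Prod>t<Suc k. Poly_Mapping.lookup m i + Suc k - t) * Poly_Mapping.lookup p (m + Poly_Mapping.single i (Suc k))"
    by (simp only: pr of_nat_mult mult_ac)
  finally show ?case .
qed

lemma Var_pow: "Var i ^ k = Poly_Mapping.single (Poly_Mapping.single i k) 1"
  by (induction k) (simp_all add: Var_def mult_single single_Suc[simplified])

lemma lookup_single_mult:
  "Poly_Mapping.lookup (Poly_Mapping.single a c * q) (a + m) = c * Poly_Mapping.lookup q m"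
  for q :: mpoly_rat
  by (simp add: lookup_mult lookup_single when_mult Sum_any_right_distrib[symmetric])

lemma lookup_single_mult0:
  fixes q :: mpoly_rat
  assumes "\<forall>x. m \<noteq> a + x"
  shows "Poly_Mapping.lookup (Poly_Mapping.single a c * q) m = 0"
proof -
  have h: "(\<lambda>aa. (if a = aa then c else 0) * (\<Sum>x. if m = aa + x then Poly_Mapping.lookup q x else 0)) = (\<lambda>_. 0)"
    using assms by (auto simp: fun_eq_iff)
  show ?thesis unfolding lookup_mult lookup_single when_def h by simp
qed

lemma lookup_term:
  "Poly_Mapping.lookup (Var i ^ k * (pdiff i ^^ k) p) m =
     of_nat (\<Prod>t<k. Poly_Mapping.lookup m i - t) * Poly_Mapping.lookup p m"
proof (cases "k \<le> Poly_Mapping.lookup m i")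
  case True
  define m' where "m' = m - Poly_Mapping.single i k"
  have m: "m = Poly_Mapping.single i k + m'"
    by (rule poly_mapping_eqI) (use True in \<open>auto simp: m'_def lookup_minus lookup_add lookup_single when_def\<close>)
  have m2: "m' + Poly_Mapping.single i k = m" using m by (simp add: add.commute)
  have l: "Poly_Mapping.lookup m' i = Poly_Mapping.lookup m i - k"
    by (simp add: m'_def lookup_minus)
  have pr: "(\<Prod>t<k. Poly_Mapping.lookup m i - k + k - t) = (\<Prod>t<k. Poly_Mapping.lookup m i - t)"
    using True by simp
  have "Poly_Mapping.lookup (Var i ^ k * (pdiff i ^^ k) p) m = Poly_Mapping.lookup ((pdiff i ^^ k) p) m'"
    unfolding Var_pow by (subst m, subst lookup_single_mult) simp
  also have "\<dots> = of_nat (\<Prod>t<k. Poly_Mapping.lookup m i - t) * Poly_Mapping.lookup p m"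
    by (simp only: lookup_pdiff_pow l m2 pr)
  finally show ?thesis .
next
  case False
  have "\<forall>x. m \<noteq> Poly_Mapping.single i k + x"
  proof (intro allI notI)
    fix x assume "m = Poly_Mapping.single i k + x"
    then have "Poly_Mapping.lookup m i = k + Poly_Mapping.lookup x i" by (simp add: lookup_add)
    then show False using False by simp
  qed
  then have "Poly_Mapping.lookup (Var i ^ k * (pdiff i ^^ k) p) m = 0"
    unfolding Var_pow by (rule lookup_single_mult0)
  moreover have "(\<Prod>t<k. Poly_Mapping.lookup m i - t) = 0"
    using False by (auto simp: prod_zero_iff intro!: bexI[of _ "Poly_Mapping.lookup m i"])
  ultimately show ?thesis by simp
qed

theorem mainTheorem16:
  fixes n k :: nat
  assumes "n \<ge> 1" and "k \<le> n - 1"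
  shows "(\<Sum>i = 1..n. Var i ^ k * (pdiff i ^^ k) (Vand n))
           = of_nat (fact k * (n choose (k + 1))) * Vand n"
proof (rule poly_mapping_eqI)
  fix m
  define N where "N = fact k * (n choose (k + 1))"
  have rhs: "Poly_Mapping.lookup (of_nat N * Vand n) m = of_nat N * Poly_Mapping.lookup (Vand n) m"
    using lookup_single_mult[of 0 "of_nat N" "Vand n" m] by (simp add: single_of_nat)
  have lhs: "Poly_Mapping.lookup (\<Sum>i = 1..n. Var i ^ k * (pdiff i ^^ k) (Vand n)) m
      = of_nat (\<Sum>i = 1..n. \<Prod>t<k. Poly_Mapping.lookup m i - t) * Poly_Mapping.lookup (Vand n) m"
    by (simp add: lookup_sum lookup_term sum_distrib_right)
  show "Poly_Mapping.lookup (\<Sum>i = 1..n. Var i ^ k * (pdiff i ^^ k) (Vand n)) m =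
        Poly_Mapping.lookup (of_nat (fact k * (n choose (k + 1))) * Vand n) m"
  proof (cases "m \<in> Poly_Mapping.keys (Vand n)")
    case True
    have "(\<Sum>i = 1..n. \<Prod>t<k. Poly_Mapping.lookup m i - t)
          = (\<Sum>j\<in>Poly_Mapping.lookup m ` {1..n}. \<Prod>t<k. j - t)"
      using sum.reindex[OF keys_Vand_perm(2)[OF True assms(1)], of "\<lambda>j. \<Prod>t<k. j - t"] by simp
    also have "\<dots> = (\<Sum>j<n. fact k * (j choose k))"
      by (subst keys_Vand_perm(1)[OF True assms(1)]) (simp add: ff_choose)
    also have "\<dots> = fact k * (\<Sum>j\<le>n - 1. j choose k)"
    proof -
      have "{..<n} = {..n - 1}" using assms(1) by auto
      then show ?thesis by (simp add: sum_distrib_left)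
    qed
    also have "\<dots> = N"
      using assms(1) by (simp add: sum_choose_upper N_def)
    finally show ?thesis using lhs rhs N_def by simp
  next
    case False
    then have "Poly_Mapping.lookup (Vand n) m = 0" by (simp add: in_keys_iff)
    then show ?thesis using lhs rhs N_def by simp
  qed
qed

end
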